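(* Let $k \ge 1$ be an integer and let $G$ be a $k$-degenerate graph with maximum degree $\Delta$, where $k \le \Delta$. Then $\chi_s'(G) \le (4k-2)\Delta - 2k^2 + 1$.
   Context: All graphs are finite and simple. A graph is $k$-degenerate if every subgraph of it has a vertex of degree at most $k$. A strong edge coloring of $G$ is an assignment of colors to the edges of $G$ such that every path with three edges receives three distinct colors; equivalently, any two distinct edges that share an endpoint, or that are both incident with a common edge (i.e., an endpoint of one is adjacent to an endpoint of the other), receive different colors. The strong chromatic index $\chi_s'(G)$ is the minimum number of colors in a strong edge coloring of $G$. *)

theory Defs
  imports Main
begin

definition simple_graph :: "'a set \<Rightarrow> 'a set set \<Rightarrow> bool" where
  "simple_graph V E \<longleftrightarrow> finite V \<and> (\<forall>e\<in>E. \<exists>u v. e = {u, v} \<and> u \<noteq> v \<and> u \<in> V \<and> v \<in> V)"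

definition degree :: "'a set set \<Rightarrow> 'a \<Rightarrow> nat" where
  "degree E v = card {e \<in> E. v \<in> e}"

definition max_degree :: "'a set \<Rightarrow> 'a set set \<Rightarrow> nat" where
  "max_degree V E = (if V = {} then 0 else Max (degree E ` V))"

definition subgraph :: "'a set \<Rightarrow> 'a set set \<Rightarrow> 'a set \<Rightarrow> 'a set set \<Rightarrow> bool" where
  "subgraph V' E' V E \<longleftrightarrow> V' \<subseteq> V \<and> E' \<subseteq> E \<and> (\<forall>e\<in>E'. e \<subseteq> V')"

definition degenerate :: "nat \<Rightarrow> 'a set \<Rightarrow> 'a set set \<Rightarrow> bool" where
  "degenerate k V E \<longleftrightarrow>
     (\<forall>V' E'. subgraph V' E' V E \<and> V' \<noteq> {} \<longrightarrow> (\<exists>v\<in>V'. degree E' v \<le> k))"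

definition strong_conflict :: "'a set set \<Rightarrow> 'a set \<Rightarrow> 'a set \<Rightarrow> bool" where
  "strong_conflict E e f \<longleftrightarrow> e \<noteq> f \<and>
     (e \<inter> f \<noteq> {} \<or> (\<exists>x\<in>e. \<exists>y\<in>f. {x, y} \<in> E))"

definition strong_edge_coloring :: "'a set set \<Rightarrow> ('a set \<Rightarrow> nat) \<Rightarrow> nat \<Rightarrow> bool" where
  "strong_edge_coloring E c n \<longleftrightarrow>
     (\<forall>e\<in>E. c e < n) \<and>
     (\<forall>e\<in>E. \<forall>f\<in>E. strong_conflict E e f \<longrightarrow> c e \<noteq> c f)"

definition strong_chromatic_index :: "'a set set \<Rightarrow> nat" where
  "strong_chromatic_index E = (LEAST n. \<exists>c. strong_edge_coloring E c n)"

end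

theory Submission
  imports Defs
begin


lemma sg_edge:
  assumes "simple_graph V E" "f \<in> E"
  obtains a b where "f = {a,b}" "a \<noteq> b" "a \<in> V" "b \<in> V"
  using assms unfolding simple_graph_def by blast

lemma sg_pair:
  assumes "simple_graph V E" "{u,v} \<in> E"
  shows "u \<noteq> v \<and> u \<in> V \<and> v \<in> V"
proof -
  obtain a b where "{u,v} = {a,b}" "a \<noteq> b" "a \<in> V" "b \<in> V"
    using sg_edge[OF assms] by metis
  then show ?thesis by (auto simp: doubleton_eq_iff)
qed

lemma sg_edge_at:
  assumes "simple_graph V E" "f \<in> E" "y \<in> f"
  obtains c where "f = {c,y}" "c \<noteq> y" "c \<in> V" "y \<in> V"
proof -
  obtain a b where "f = {a,b}" "a \<noteq> b" "a \<in> V" "b \<in> V"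
    using sg_edge[OF assms(1,2)] by metis
  then show ?thesis using that assms(3) by (auto simp: insert_commute)
qed

lemma greedy:
  assumes "finite X"
    and "\<forall>S\<subseteq>X. S \<noteq> {} \<longrightarrow> (\<exists>e\<in>S. card {f\<in>S. R e f} \<le> N)"
    and "\<forall>e f. R e f \<longrightarrow> R f e" and "\<forall>e. \<not> R e e"
  shows "\<exists>c. (\<forall>e\<in>X. c e < Suc N) \<and> (\<forall>e\<in>X. \<forall>f\<in>X. R e f \<longrightarrow> c e \<noteq> c f)"
  using assms(1,2)
proof (induction X rule: finite_psubset_induct)
  case (psubset X)
  show ?case
  proof (cases "X = {}")
    case True then show ?thesis by auto
  next
    case False
    then obtain e where e: "e \<in> X" "card {f\<in>X. R e f} \<le> N"
      using psubset.prems by blast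
    have "X - {e} \<subset> X" using e by blast
    moreover have "\<forall>S\<subseteq>X - {e}. S \<noteq> {} \<longrightarrow> (\<exists>e\<in>S. card {f\<in>S. R e f} \<le> N)"
      using psubset.prems by blast
    ultimately have "\<exists>c. (\<forall>g\<in>X - {e}. c g < Suc N) \<and>
      (\<forall>g\<in>X - {e}. \<forall>f\<in>X - {e}. R g f \<longrightarrow> c g \<noteq> c f)"
      by (rule psubset.IH)
    then obtain c where c: "\<forall>e\<in>X - {e}. c e < Suc N"
      "\<forall>g\<in>X - {e}. \<forall>f\<in>X - {e}. R g f \<longrightarrow> c g \<noteq> c f"
      by blast
    let ?U = "c ` {f\<in>X. R e f}"
    have cU: "card ?U \<le> N"
    proof -
      have "finite {f\<in>X. R e f}" using psubset.hyps by simp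
      then have "card ?U \<le> card {f\<in>X. R e f}" by (rule card_image_le)
      then show ?thesis using e(2) by linarith
    qed
    have "\<not> {..<Suc N} \<subseteq> ?U"
    proof
      assume "{..<Suc N} \<subseteq> ?U"
      then have "card {..<Suc N} \<le> card ?U"
        using psubset.hyps by (intro card_mono) auto
      then show False using cU by simp
    qed
    then obtain col where col: "col < Suc N" "col \<notin> ?U" by auto
    define c' where "c' = c(e := col)"
    have "\<forall>g\<in>X. c' g < Suc N" using c(1) col(1) by (auto simp: c'_def)
    moreover have "\<forall>g\<in>X. \<forall>f\<in>X. R g f \<longrightarrow> c' g \<noteq> c' f"
    proof (intro ballI impI)
      fix g f assume g: "g \<in> X" and f: "f \<in> X" and R: "R g f"
      have ne: "g \<noteq> f" using R assms(4) by blast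
      show "c' g \<noteq> c' f"
      proof (cases "g = e")
        case True
        then show ?thesis using ne R f col(2) by (auto simp: c'_def)
      next
        case gne: False
        show ?thesis
        proof (cases "f = e")
          case True
          then have "R e g" using R assms(3) by blast
          then show ?thesis using True gne g col(2) by (auto simp: c'_def)
        next
          case False
          then show ?thesis using gne g f R c(2) by (auto simp: c'_def)
        qed
      qed
    qed
    ultimately show ?thesis by blast
  qed
qed

lemma rank_exists:
  assumes sg: "simple_graph V E" and dg: "degenerate k V E"
  shows "\<forall>W. W \<subseteq> V \<longrightarrow> card W = n \<longrightarrow> (\<exists>r. inj_on r W \<and> r ` W \<subseteq> {..<card W} \<and>
           (\<forall>v\<in>W. card {u\<in>W. {u,v}\<in>E \<and> r u < r v} \<le> k))"
proof (induction n)
  case 0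
  show ?case
  proof (intro allI impI)
    fix W assume "W \<subseteq> V" "card W = 0"
    moreover have "finite V" using sg by (simp add: simple_graph_def)
    ultimately have "W = {}" using finite_subset by fastforce
    then show "\<exists>r. inj_on r W \<and> r ` W \<subseteq> {..<card W} \<and>
           (\<forall>v\<in>W. card {u\<in>W. {u,v}\<in>E \<and> r u < r v} \<le> k)" by auto
  qed
next
  case (Suc n)
  show ?case
  proof (intro allI impI)
    fix W assume WV: "W \<subseteq> V" and cW: "card W = Suc n"
    have finV: "finite V" using sg by (simp add: simple_graph_def)
    have finW: "finite W" using WV finV finite_subset by blast
    have Wne: "W \<noteq> {}" using cW by auto
    define E' where "E' = {e\<in>E. e \<subseteq> W}"
    have "subgraph W E' V E" using WV by (auto simp: subgraph_def E'_def)
    then obtain v where v: "v \<in> W" "degree E' v \<le> k"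
      using dg Wne unfolding degenerate_def by blast
    have finE': "finite {e\<in>E'. v \<in> e}"
      using finW by (rule finite_subset[rotated, OF finite_Pow_iff[THEN iffD2]]) (auto simp: E'_def)
    have nb: "card {u\<in>W. {u,v}\<in>E} \<le> k"
    proof -
      have "card {u\<in>W. {u,v}\<in>E} \<le> card {e\<in>E'. v \<in> e}"
      proof (rule card_inj_on_le[OF _ _ finE'])
        show "inj_on (\<lambda>u. {u,v}) {u\<in>W. {u,v}\<in>E}"
          by (auto simp: inj_on_def doubleton_eq_iff dest: sg_pair[OF sg])
        show "(\<lambda>u. {u,v}) ` {u\<in>W. {u,v}\<in>E} \<subseteq> {e\<in>E'. v \<in> e}"
          using v(1) by (auto simp: E'_def)
      qed
      then show ?thesis using v(2) by (simp add: degree_def)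
    qed
    have "W - {v} \<subseteq> V" "card (W - {v}) = n" using WV cW v(1) finW by auto
    then obtain r where r: "inj_on r (W - {v})" "r ` (W - {v}) \<subseteq> {..<n}"
      "\<forall>w\<in>W - {v}. card {u\<in>W - {v}. {u,w}\<in>E \<and> r u < r w} \<le> k"
      using Suc.IH[rule_format, of "W - {v}"] by blast
    define r' where "r' = r(v := n)"
    have "inj_on r' W"
      unfolding inj_on_def r'_def using r(1,2) v(1)
      by (auto simp: inj_on_def)
    moreover have "r' ` W \<subseteq> {..<card W}" using r(2) cW by (auto simp: r'_def)
    moreover have "\<forall>w\<in>W. card {u\<in>W. {u,w}\<in>E \<and> r' u < r' w} \<le> k"
    proof
      fix w assume w: "w \<in> W"
      show "card {u\<in>W. {u,w}\<in>E \<and> r' u < r' w} \<le> k"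
      proof (cases "w = v")
        case True
        have "card {u\<in>W. {u,w}\<in>E \<and> r' u < r' w} \<le> card {u\<in>W. {u,v}\<in>E}"
          using True finW by (intro card_mono) auto
        then show ?thesis using nb by linarith
      next
        case False
        have "{u\<in>W. {u,w}\<in>E \<and> r' u < r' w} \<subseteq> {u\<in>W - {v}. {u,w}\<in>E \<and> r u < r w}"
          using False r(2) w by (auto simp: r'_def)
        then have "card {u\<in>W. {u,w}\<in>E \<and> r' u < r' w} \<le> card {u\<in>W - {v}. {u,w}\<in>E \<and> r u < r w}"
          using finW by (intro card_mono) auto
        moreover have "card {u\<in>W - {v}. {u,w}\<in>E \<and> r u < r w} \<le> k"
          using r(3) w False by blast
        ultimately show ?thesis by linarith
      qed
    qed
    ultimately show "\<exists>r. inj_on r W \<and> r ` W \<subseteq> {..<card W} \<and>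
           (\<forall>v\<in>W. card {u\<in>W. {u,v}\<in>E \<and> r u < r v} \<le> k)" by blast
  qed
qed



lemma arith_bound:
  fixes bx fx bq fy k D :: int
  assumes "bx \<le> k" "bq \<le> k" "bx+fx \<le> D" "bq+fy \<le> D" "k \<le> D" "1 \<le> k"
  shows "(D-1)+(bq-1)+bx*(D-1)+(fx-1)*(k-1)+(bq-1)*(D-1)+fy*(k-1) \<le> (4*k-2)*D - 2*k^2"
proof -
  have h1: "0 \<le> (k-bx)*(D-k)" using assms by simp
  have h2: "0 \<le> (D-bx-fx)*(k-1)" using assms by simp
  have h3: "0 \<le> (k-bq)*(D-k+1)" using assms by simp
  have h4: "0 \<le> (D-bq-fy)*(k-1)" using assms by simp
  have eq: "(D-1)+(bq-1)+bx*(D-1)+(fx-1)*(k-1)+(bq-1)*(D-1)+fy*(k-1) =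
     ((4*k-2)*D - 2*k^2) - ((k-bx)*(D-k) + (D-bx-fx)*(k-1) + (k-bq)*(D-k+1) + (D-bq-fy)*(k-1))"
    by (simp add: algebra_simps power2_eq_square)
  show ?thesis unfolding eq using h1 h2 h3 h4 by linarith
qed

lemma sum_le_cm:
  fixes f :: "'b \<Rightarrow> nat"
  shows "(\<And>i. i \<in> A \<Longrightarrow> f i \<le> K) \<Longrightarrow> sum f A \<le> card A * K"
  using sum_bounded_above[of A f K] by simp

lemma card_le_nbr:
  assumes sg: "simple_graph V E" and v: "v \<in> V"
  shows "card {u\<in>V. {u,v}\<in>E} \<le> degree E v"
proof -
  have finV: "finite V" using sg by (simp add: simple_graph_def)
  have finE: "finite E"
    using sg finV unfolding simple_graph_def
    by (intro finite_subset[of E "Pow V"]) auto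
  show ?thesis unfolding degree_def
    by (rule card_inj_on_le[where f="\<lambda>u. {u,v}"])
       (auto simp: inj_on_def doubleton_eq_iff finE dest: sg_pair[OF sg])
qed



lemma main_count:
  fixes r :: "'a \<Rightarrow> nat"
  assumes sg: "simple_graph V E" and inj: "inj_on r V"
    and bk: "\<forall>v\<in>V. card {u\<in>V. {u,v}\<in>E \<and> r u < r v} \<le> k"
    and degD: "\<forall>v\<in>V. degree E v \<le> D" and k1: "1 \<le> k" and kD: "k \<le> D"
    and e: "{x,y} \<in> E" and xy: "r x < r y"
  shows "int (card {f\<in>E. strong_conflict E {x,y} f \<and> Min (r ` f) \<le> r x})
          \<le> (4*int k-2)*int D - 2*(int k)^2"
proof -
  have finV: "finite V" using sg by (simp add: simple_graph_def)
  have finE: "finite E"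
    using sg finV unfolding simple_graph_def
    by (intro finite_subset[of E "Pow V"]) auto
  define B where "B v = {u\<in>V. {u,v}\<in>E \<and> r u < r v}" for v
  define F where "F v = {u\<in>V. {u,v}\<in>E \<and> r v < r u}" for v
  define A where "A v = {f\<in>E. v\<in>f}" for v
  have xV: "x \<in> V" and yV: "y \<in> V" and xney: "x \<noteq> y" using sg_pair[OF sg e] by auto
  have finB: "finite (B v)" for v using finV unfolding B_def by simp
  have finF: "finite (F v)" for v using finV unfolding F_def by simp
  have finA: "finite (A v)" for v using finE unfolding A_def by simp
  have Bk: "card (B v) \<le> k" if "v \<in> V" for v using bk that unfolding B_def by blast
  have BF: "card (B v) + card (F v) \<le> D" if v: "v \<in> V" for v
  proof -
    have "card (B v) + card (F v) = card (B v \<union> F v)"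
      by (rule card_Un_disjoint[OF finB finF, symmetric]) (auto simp: B_def F_def)
    also have "\<dots> \<le> card {u\<in>V. {u,v}\<in>E}"
      by (rule card_mono) (auto simp: finV B_def F_def)
    also have "\<dots> \<le> degree E v" by (rule card_le_nbr[OF sg v])
    also have "\<dots> \<le> D" using degD v by blast
    finally show ?thesis .
  qed
  have Ad: "card (A v) \<le> D" if "v \<in> V" for v
    using degD that unfolding A_def degree_def by blast
  have sym: "{a,b} = {b,a}" for a b :: 'a by (rule insert_commute)
  have xBy: "x \<in> B y" using xV e xy unfolding B_def by simp
  have yFx: "y \<in> F x" using yV e xy unfolding F_def by (simp add: sym)
  have rne: "r a \<noteq> r b" if "a \<in> V" "b \<in> V" "a \<noteq> b" for a b
    using inj that by (meson inj_on_def)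
  define C1 where "C1 = A x - {{x,y}}"
  define C2 where "C2 = (\<lambda>a. {a,y}) ` (B y - {x})"
  define C3 where "C3 = (\<Union>t\<in>B x. A t - {{t,x}})"
  define C4 where "C4 = (\<Union>t\<in>F x - {y}. (\<lambda>c. {c,t}) ` (B t - {x}))"
  define C5 where "C5 = (\<Union>t\<in>B y - {x}. A t - {{t,y}})"
  define C6 where "C6 = (\<Union>t\<in>F y. (\<lambda>c. {c,t}) ` (B t - {y}))"
  let ?T = "{f\<in>E. strong_conflict E {x,y} f \<and> Min (r ` f) \<le> r x}"
  have sub: "?T \<subseteq> C1 \<union> C2 \<union> C3 \<union> C4 \<union> C5 \<union> C6"
  proof
    fix f assume "f \<in> ?T"
    then have fE: "f \<in> E" and conf: "strong_conflict E {x,y} f"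
      and mr: "Min (r ` f) \<le> r x" by auto
    from conf have fne: "f \<noteq> {x,y}" and
      cc: "{x,y} \<inter> f \<noteq> {} \<or> (\<exists>s\<in>{x,y}. \<exists>t\<in>f. {s,t}\<in>E)"
      unfolding strong_conflict_def by auto
    show "f \<in> C1 \<union> C2 \<union> C3 \<union> C4 \<union> C5 \<union> C6"
    proof (cases "x \<in> f")
      case True
      then have "f \<in> C1" using fE fne by (simp add: C1_def A_def)
      then show ?thesis by blast
    next
      case xf: False
      show ?thesis
      proof (cases "y \<in> f")
        case True
        obtain c where fc: "f = {c,y}" "c \<noteq> y" "c \<in> V"
          using sg_edge_at[OF sg fE True] by metis
        have cx: "c \<noteq> x" using xf fc by auto
        have "min (r c) (r y) \<le> r x" using mr fc by simp
        moreover have "r c \<noteq> r x" using rne[OF fc(3) xV cx] .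
        ultimately have "r c < r y" using xy by (auto simp: min_def split: if_splits)
        then have "c \<in> B y - {x}" using fc fE cx unfolding B_def by simp
        then have "f \<in> C2" unfolding C2_def using fc by blast
        then show ?thesis by blast
      next
        case yf: False
        then have "{x,y} \<inter> f = {}" using xf by auto
        then obtain s t where st: "s \<in> {x,y}" "t \<in> f" "{s,t} \<in> E" using cc by blast
        obtain c where fc: "f = {c,t}" "c \<noteq> t" "c \<in> V" "t \<in> V"
          using sg_edge_at[OF sg fE st(2)] by metis
        have tx: "t \<noteq> x" "t \<noteq> y" "c \<noteq> x" "c \<noteq> y" using xf yf fc st(2) by auto
        have mm: "min (r c) (r t) \<le> r x" using mr fc by simp
        have rcx: "r c \<noteq> r x" using rne[OF fc(3) xV tx(3)] .
        have ctE: "{c,t} \<in> E" using fE fc by simp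
        show ?thesis
        proof (cases "s = x")
          case True
          have txE: "{t,x} \<in> E" using st(3) True by (simp add: sym)
          have rtx: "r t \<noteq> r x" using rne[OF fc(4) xV tx(1)] .
          show ?thesis
          proof (cases "r t < r x")
            case True
            then have "t \<in> B x" using txE fc(4) unfolding B_def by simp
            moreover have "f \<in> A t - {{t,x}}" using fE st(2) xf unfolding A_def by auto
            ultimately have "f \<in> C3" unfolding C3_def by blast
            then show ?thesis by blast
          next
            case False
            then have rt: "r x < r t" using rtx by linarith
            then have "t \<in> F x - {y}" using txE fc(4) tx unfolding F_def by simp
            moreover have "c \<in> B t - {x}"
              using mm rcx rt ctE fc(3) tx unfolding B_def by (auto simp: min_def split: if_splits)
            ultimately have "f \<in> C4" unfolding C4_def using fc(1) by blast
            then show ?thesis by blast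
          qed
        next
          case False
          then have sy: "s = y" using st(1) by simp
          have tyE: "{t,y} \<in> E" using st(3) sy by (simp add: sym)
          have rty: "r t \<noteq> r y" using rne[OF fc(4) yV tx(2)] .
          show ?thesis
          proof (cases "r t < r y")
            case True
            then have "t \<in> B y - {x}" using tyE fc(4) tx unfolding B_def by simp
            moreover have "f \<in> A t - {{t,y}}" using fE st(2) yf unfolding A_def by auto
            ultimately have "f \<in> C5" unfolding C5_def by blast
            then show ?thesis by blast
          next
            case False
            then have rt: "r y < r t" using rty by linarith
            then have "t \<in> F y" using tyE fc(4) unfolding F_def by simp
            moreover have "c \<in> B t - {y}"
              using mm rcx rt xy ctE fc(3) tx unfolding B_def by (auto simp: min_def split: if_splits)
            ultimately have "f \<in> C6" unfolding C6_def using fc(1) by blast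
            then show ?thesis by blast
          qed
        qed
      qed
    qed
  qed
  define bx where "bx = card (B x)"
  define fx where "fx = card (F x)"
  define bq where "bq = card (B y)"
  define fy where "fy = card (F y)"
  have bx1: "bq \<ge> 1" using xBy finB unfolding bq_def by (metis One_nat_def Suc_leI card_gt_0_iff empty_iff)
  have fx1: "fx \<ge> 1" using yFx finF unfolding fx_def by (metis One_nat_def Suc_leI card_gt_0_iff empty_iff)
  have D1: "D \<ge> 1" using k1 kD by simp
  have c1: "card C1 \<le> D - 1"
  proof -
    have "{x,y} \<in> A x" using e unfolding A_def by simp
    then have "card C1 = card (A x) - 1" unfolding C1_def using finA by simp
    then show ?thesis using Ad[OF xV] by linarith
  qed
  have c2: "card C2 \<le> bq - 1"
  proof -
    have "card C2 \<le> card (B y - {x})" unfolding C2_def by (rule card_image_le) (simp add: finB)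
    also have "\<dots> = bq - 1" using xBy finB unfolding bq_def by simp
    finally show ?thesis .
  qed
  have c3: "card C3 \<le> bx * (D - 1)"
  proof -
    have "card C3 \<le> (\<Sum>t\<in>B x. card (A t - {{t,x}}))" unfolding C3_def
      by (rule card_UN_le) (simp add: finB)
    also have "\<dots> \<le> card (B x) * (D - 1)"
    proof (rule sum_le_cm)
      fix t assume t: "t \<in> B x"
      then have "{t,x} \<in> A t" "t \<in> V" unfolding A_def B_def by auto
      then show "card (A t - {{t,x}}) \<le> D - 1" using finA Ad by (simp add: diff_le_mono)
    qed
    finally show ?thesis unfolding bx_def .
  qed
  have c4: "card C4 \<le> (fx - 1) * (k - 1)"
  proof -
    have "card C4 \<le> (\<Sum>t\<in>F x - {y}. card ((\<lambda>c. {c,t}) ` (B t - {x})))" unfolding C4_def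
      by (rule card_UN_le) (simp add: finF)
    also have "\<dots> \<le> card (F x - {y}) * (k - 1)"
    proof (rule sum_le_cm)
      fix t assume t: "t \<in> F x - {y}"
      then have xt: "x \<in> B t" and tV: "t \<in> V" using xV unfolding F_def B_def by (auto simp: sym)
      have "card ((\<lambda>c. {c,t}) ` (B t - {x})) \<le> card (B t - {x})" by (rule card_image_le) (simp add: finB)
      also have "\<dots> = card (B t) - 1" using xt finB by simp
      also have "\<dots> \<le> k - 1" using Bk[OF tV] by (simp add: diff_le_mono)
      finally show "card ((\<lambda>c. {c,t}) ` (B t - {x})) \<le> k - 1" .
    qed
    also have "card (F x - {y}) = fx - 1" using yFx finF unfolding fx_def by simp
    finally show ?thesis .
  qed
  have c5: "card C5 \<le> (bq - 1) * (D - 1)"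
  proof -
    have "card C5 \<le> (\<Sum>t\<in>B y - {x}. card (A t - {{t,y}}))" unfolding C5_def
      by (rule card_UN_le) (simp add: finB)
    also have "\<dots> \<le> card (B y - {x}) * (D - 1)"
    proof (rule sum_le_cm)
      fix t assume t: "t \<in> B y - {x}"
      then have "{t,y} \<in> A t" "t \<in> V" unfolding A_def B_def by auto
      then show "card (A t - {{t,y}}) \<le> D - 1" using finA Ad by (simp add: diff_le_mono)
    qed
    also have "card (B y - {x}) = bq - 1" using xBy finB unfolding bq_def by simp
    finally show ?thesis .
  qed
  have c6: "card C6 \<le> fy * (k - 1)"
  proof -
    have "card C6 \<le> (\<Sum>t\<in>F y. card ((\<lambda>c. {c,t}) ` (B t - {y})))" unfolding C6_def
      by (rule card_UN_le) (simp add: finF)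
    also have "\<dots> \<le> card (F y) * (k - 1)"
    proof (rule sum_le_cm)
      fix t assume t: "t \<in> F y"
      then have yt: "y \<in> B t" and tV: "t \<in> V" using yV unfolding F_def B_def by (auto simp: sym)
      have "card ((\<lambda>c. {c,t}) ` (B t - {y})) \<le> card (B t - {y})" by (rule card_image_le) (simp add: finB)
      also have "\<dots> = card (B t) - 1" using yt finB by simp
      also have "\<dots> \<le> k - 1" using Bk[OF tV] by (simp add: diff_le_mono)
      finally show "card ((\<lambda>c. {c,t}) ` (B t - {y})) \<le> k - 1" .
    qed
    finally show ?thesis unfolding fy_def .
  qed
  have finC: "finite (C1 \<union> C2 \<union> C3 \<union> C4 \<union> C5 \<union> C6)"
    unfolding C1_def C2_def C3_def C4_def C5_def C6_def using finA finB finF by auto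
  have "card ?T \<le> card (C1 \<union> C2 \<union> C3 \<union> C4 \<union> C5 \<union> C6)"
    by (rule card_mono[OF finC sub])
  also have "\<dots> \<le> card C1 + card C2 + card C3 + card C4 + card C5 + card C6"
    by (meson add_mono card_Un_le le_refl order_trans)
  finally have tot: "card ?T \<le> (D - 1) + (bq - 1) + bx * (D - 1) + (fx - 1) * (k - 1) + (bq - 1) * (D - 1) + fy * (k - 1)"
    using c1 c2 c3 c4 c5 c6 by linarith
  have itot: "int (card ?T) \<le> (int D - 1) + (int bq - 1) + int bx * (int D - 1) + (int fx - 1) * (int k - 1)
      + (int bq - 1) * (int D - 1) + int fy * (int k - 1)"
  proof -
    obtain d where d: "D = Suc d" using D1 by (cases D) auto
    obtain kk where kk: "k = Suc kk" using k1 by (cases k) auto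
    obtain bb where bb: "bq = Suc bb" using bx1 by (cases bq) auto
    obtain ff where ff: "fx = Suc ff" using fx1 by (cases fx) auto
    have "card ?T \<le> d + bb + bx*d + ff*kk + bb*d + fy*kk" using tot d kk bb ff by simp
    then have "int (card ?T) \<le> int (d + bb + bx*d + ff*kk + bb*d + fy*kk)" by (simp only: of_nat_le_iff)
    then show ?thesis using d kk bb ff by simp
  qed
  have "int bx + int fx \<le> int D" "int bq + int fy \<le> int D" "int bx \<le> int k" "int bq \<le> int k"
    using BF[OF xV] BF[OF yV] Bk[OF xV] Bk[OF yV] unfolding bx_def fx_def bq_def fy_def by auto
  then have "(int D - 1) + (int bq - 1) + int bx * (int D - 1) + (int fx - 1) * (int k - 1)
      + (int bq - 1) * (int D - 1) + int fy * (int k - 1) \<le> (4*int k-2)*int D - 2*(int k)^2"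
    using kD k1 by (intro arith_bound) auto
  then show ?thesis using itot by linarith
qed



theorem theorem1:
  fixes V :: "'a set" and E :: "'a set set" and k :: nat
  assumes "simple_graph V E"
    and "k \<ge> 1"
    and "degenerate k V E"
    and "k \<le> max_degree V E"
  shows "int (strong_chromatic_index E)
           \<le> (4 * int k - 2) * int (max_degree V E) - 2 * (int k)^2 + 1"
proof -
  note sg = assms(1)
  define D where "D = max_degree V E"
  have finV: "finite V" using sg by (simp add: simple_graph_def)
  have finE: "finite E"
    using sg finV unfolding simple_graph_def
    by (intro finite_subset[of E "Pow V"]) auto
  have Vne: "V \<noteq> {}" using assms(2,4) by (auto simp: max_degree_def)
  have degD: "\<forall>v\<in>V. degree E v \<le> D"
    using Vne finV by (auto simp: D_def max_degree_def intro: Max_ge)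
  obtain r :: "'a \<Rightarrow> nat" where r: "inj_on r V"
    "\<forall>v\<in>V. card {u\<in>V. {u,v}\<in>E \<and> r u < r v} \<le> k"
    using rank_exists[OF sg assms(3), of "card V"] by blast
  define M where "M = (4 * int k - 2) * int D - 2 * (int k)^2"
  have M0: "0 \<le> M"
  proof -
    have "(4 * int k - 2) * int k \<le> (4 * int k - 2) * int D"
      using assms(2,4) by (intro mult_left_mono) (auto simp: D_def)
    moreover have "0 \<le> 2 * int k * (int k - 1)" using assms(2) by simp
    ultimately show ?thesis unfolding M_def by (simp add: algebra_simps power2_eq_square)
  qed
  define N where "N = nat M"
  have hyp: "\<forall>S\<subseteq>E. S \<noteq> {} \<longrightarrow> (\<exists>e\<in>S. card {f\<in>S. strong_conflict E e f} \<le> N)"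
  proof (intro allI impI)
    fix S assume S: "S \<subseteq> E" "S \<noteq> {}"
    define g where "g f = Min (r ` f)" for f
    have finS: "finite S" using S finE finite_subset by blast
    have "Max (g ` S) \<in> g ` S" using finS S by (intro Max_in) auto
    then obtain e where e: "e \<in> S" "g e = Max (g ` S)" by (metis imageE)
    have gmax: "g f \<le> g e" if "f \<in> S" for f using e finS that by simp
    obtain a b where ab: "e = {a,b}" "a \<noteq> b" "a \<in> V" "b \<in> V"
      using sg_edge[OF sg] S e by blast
    have "r a \<noteq> r b" using r(1) ab by (meson inj_on_def)
    then obtain x y where xy: "e = {x,y}" "r x < r y"
      using ab(1) by (metis insert_commute linorder_neqE_nat)
    have ge: "g e = r x" using xy by (simp add: g_def)
    have "{f\<in>S. strong_conflict E e f} \<subseteq> {f\<in>E. strong_conflict E {x,y} f \<and> Min (r ` f) \<le> r x}"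
      using S gmax ge xy unfolding g_def by auto
    then have "card {f\<in>S. strong_conflict E e f} \<le> card {f\<in>E. strong_conflict E {x,y} f \<and> Min (r ` f) \<le> r x}"
      using finE by (intro card_mono) auto
    moreover have "int (card {f\<in>E. strong_conflict E {x,y} f \<and> Min (r ` f) \<le> r x}) \<le> M"
      unfolding M_def
      by (rule main_count[OF sg r(1) r(2) degD assms(2)]) (use assms(4) xy e S in \<open>auto simp: D_def\<close>)
    ultimately have "card {f\<in>S. strong_conflict E e f} \<le> N" unfolding N_def by linarith
    then show "\<exists>e\<in>S. card {f\<in>S. strong_conflict E e f} \<le> N" using e(1) by blast
  qed
  have symc: "\<forall>e f. strong_conflict E e f \<longrightarrow> strong_conflict E f e"
    unfolding strong_conflict_def by (metis inf_commute insert_commute)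
  have irr: "\<forall>e. \<not> strong_conflict E e e" unfolding strong_conflict_def by simp
  obtain c where "\<forall>e\<in>E. c e < Suc N" "\<forall>e\<in>E. \<forall>f\<in>E. strong_conflict E e f \<longrightarrow> c e \<noteq> c f"
    using greedy[OF finE hyp symc irr] by blast
  then have "strong_edge_coloring E c (Suc N)" unfolding strong_edge_coloring_def by blast
  then have "strong_chromatic_index E \<le> Suc N"
    unfolding strong_chromatic_index_def by (blast intro: Least_le)
  then have "int (strong_chromatic_index E) \<le> M + 1" using M0 unfolding N_def by linarith
  then show ?thesis unfolding M_def D_def .
qed

end
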